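(* Let $\underline x\le0$, $\alpha_0\in(0,1)$, $\delta>0$, $\Gamma_1\in\mathbb R$, $\Lambda_1>0$. Let $\xi$ be a real random variable with law $\mu\in\mathcal P_2(\mathbb R)$ satisfying $E|\xi-\underline x|^{-2}<\delta^{-2}$, let $\eta\sim N(0,1)$ be independent of $\xi$, and set $X=\underline x+(\xi-\underline x)e^{\Gamma_1+\sqrt{\Lambda_1}\eta}$ with distribution function $F_X$. Then there is exactly one $z\in\mathbb R$ with $F_X(z)=\alpha_0$.
   Context: $\mathcal P_2(\mathbb R)$ denotes the probability measures on $\mathbb R$ with finite second moment. In the paper $X=X^{t,\xi}_T$ is the terminal wealth under a deterministic proportional strategy, with $\Gamma_1=\Gamma_1(t)$, $\Lambda_1=\Lambda_1(t)$, and the condition on $\mu$ defines the set $\mathcal P^\delta_{\mathrm{MES}}$. *)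

theory Defs
  imports "HOL-Probability.Probability"
begin

text \<open>Inverse square distance with the convention that it is infinite at distance 0,
  so that the expectation of |xi - xl|^(-2) is infinite whenever xi = xl with positive probability.\<close>
definition inv_sq_dist :: "real \<Rightarrow> real \<Rightarrow> ennreal" where
  "inv_sq_dist xl y = (if y = xl then \<infinity> else ennreal (1 / \<bar>y - xl\<bar>^2))"

end

theory Submission
  imports Defs
begin

lemma snd_pos:
  fixes e1 e2 :: real assumes "e1 < e2"
  shows "emeasure (density lborel (\<lambda>x. ennreal (std_normal_density x))) {e1<..<e2} \<noteq> 0"
proof
  assume "emeasure (density lborel (\<lambda>x. ennreal (std_normal_density x))) {e1<..<e2} = 0"
  then have "{e1<..<e2} \<in> null_sets (density lborel (\<lambda>x. ennreal (std_normal_density x)))"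
    by (simp add: null_sets_def)
  then have "AE x in lborel. x \<in> {e1<..<e2} \<longrightarrow> ennreal (std_normal_density x) = 0"
    by (subst (asm) null_sets_density_iff) auto
  then have "AE x in lborel. x \<notin> {e1<..<e2}"
  proof (rule AE_mp)
    show "AE x in lborel. (x \<in> {e1<..<e2} \<longrightarrow> ennreal (std_normal_density x) = 0) \<longrightarrow> x \<notin> {e1<..<e2}"
      using normal_density_pos[of 1 0] by (auto intro!: AE_I2 simp: less_le)
  qed
  moreover have eq: "{x \<in> space lborel. \<not> (x \<notin> {e1<..<e2})} = {e1<..<e2}" by auto
  ultimately have "emeasure lborel {e1<..<e2} = 0"
    using AE_iff_measurable[OF _ eq] by simp
  with assms show False by simp
qed

lemma snd_null:
  fixes A :: "real set" assumes "A \<in> sets borel" "emeasure lborel A = 0"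
  shows "emeasure (density lborel (\<lambda>x. ennreal (std_normal_density x))) A = 0"
proof -
  have "A \<in> null_sets lborel" using assms by (simp add: null_sets_def)
  then have "AE x in lborel. x \<notin> A" by (rule AE_not_in)
  then have "AE x in lborel. x \<in> A \<longrightarrow> ennreal (std_normal_density x) = 0"
    by eventually_elim auto
  then have "A \<in> null_sets (density lborel (\<lambda>x. ennreal (std_normal_density x)))"
    using assms by (subst null_sets_density_iff) auto
  then show ?thesis by (simp add: null_sets_def)
qed

lemma interval_lemma:
  fixes a v1 v2 G Lam :: real
  assumes "0 < a" "0 < v1" "v1 < v2" "0 < Lam"
  shows "\<exists>e1 e2. e1 < e2 \<and> (\<forall>e. e1 < e \<and> e < e2 \<longrightarrow> v1 < a * exp (G + sqrt Lam * e) \<and> a * exp (G + sqrt Lam * e) < v2)"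
proof -
  define s where "s = sqrt Lam"
  have s: "s > 0" using assms by (simp add: s_def)
  define e1 where "e1 = (ln (v1 / a) - G) / s"
  define e2 where "e2 = (ln (v2 / a) - G) / s"
  have "ln (v1 / a) < ln (v2 / a)" using assms by (simp add: divide_strict_right_mono)
  then have "e1 < e2" using s by (simp add: e1_def e2_def divide_strict_right_mono)
  moreover have "v1 < a * exp (G + s * e) \<and> a * exp (G + s * e) < v2" if "e1 < e" "e < e2" for e
  proof -
    have "ln (v1 / a) < G + s * e" using that(1) s by (simp add: e1_def field_simps)
    then have "exp (ln (v1 / a)) < exp (G + s * e)" by simp
    then have 1: "v1 / a < exp (G + s * e)" using assms by simp
    have "G + s * e < ln (v2 / a)" using that(2) s by (simp add: e2_def field_simps)
    then have "exp (G + s * e) < exp (ln (v2 / a))" by simp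
    then have 2: "exp (G + s * e) < v2 / a" using assms by simp
    show ?thesis using 1 2 assms by (simp add: field_simps)
  qed
  ultimately show ?thesis unfolding s_def by blast
qed

theorem lemma10:
  fixes M :: "'a measure" and \<xi> \<eta> :: "'a \<Rightarrow> real" and \<mu> :: "real measure"
    and xl \<alpha>0 \<delta> \<Gamma>1 \<Lambda>1 :: real
  assumes "prob_space M"
    and "xl \<le> 0" and "0 < \<alpha>0" and "\<alpha>0 < 1" and "\<delta> > 0" and "\<Lambda>1 > 0"
    and "\<xi> \<in> borel_measurable M" and "distr M borel \<xi> = \<mu>"
    and "integrable \<mu> (\<lambda>x. x ^ 2)"
    and "(\<integral>\<^sup>+ \<omega>. inv_sq_dist xl (\<xi> \<omega>) \<partial>M) < ennreal (1 / \<delta> ^ 2)"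
    and "distributed M lborel \<eta> std_normal_density"
    and "prob_space.indep_var M borel \<xi> borel \<eta>"
  shows "\<exists>!z::real. measure M {\<omega> \<in> space M.
           xl + (\<xi> \<omega> - xl) * exp (\<Gamma>1 + sqrt \<Lambda>1 * \<eta> \<omega>) \<le> z} = \<alpha>0"
proof -
  interpret P: prob_space M by fact
  note xim[measurable] = assms(7)
  have etam[measurable]: "\<eta> \<in> borel_measurable M"
    using assms(11) by (simp add: distributed_def)
  define \<nu> where "\<nu> = distr M borel \<eta>"
  have nu_eq: "\<nu> = density lborel (\<lambda>x. ennreal (std_normal_density x))"
  proof -
    have "distr M lborel \<eta> = density lborel (\<lambda>x. ennreal (std_normal_density x))"
      using assms(11) by (simp add: distributed_def)
    moreover have "distr M borel \<eta> = distr M lborel \<eta>" by (rule distr_cong) auto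
    ultimately show ?thesis by (simp add: \<nu>_def)
  qed
  have probnu: "prob_space \<nu>" unfolding \<nu>_def by (rule P.prob_space_distr) simp
  then interpret N: sigma_finite_measure \<nu> by (simp add: prob_space_imp_sigma_finite)
  have sets_nu[simp]: "sets \<nu> = sets borel" by (simp add: \<nu>_def)
  have sets_mu[simp]: "sets \<mu> = sets borel" using assms(8) by auto
  have sets_prod: "sets (\<mu> \<Otimes>\<^sub>M \<nu>) = sets (borel \<Otimes>\<^sub>M borel)"
    by (rule sets_pair_measure_cong) simp_all
  have joint: "distr M (borel \<Otimes>\<^sub>M borel) (\<lambda>\<omega>. (\<xi> \<omega>, \<eta> \<omega>)) = \<mu> \<Otimes>\<^sub>M \<nu>"
    using assms(12) assms(8) unfolding P.indep_var_distribution_eq \<nu>_def by simp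
  have key: "emeasure M {\<omega> \<in> space M. (\<xi> \<omega>, \<eta> \<omega>) \<in> C} = (\<integral>\<^sup>+ y. emeasure \<nu> (Pair y -` C) \<partial>\<mu>)"
    if C: "C \<in> sets (borel \<Otimes>\<^sub>M borel)" for C
  proof -
    have "emeasure M {\<omega> \<in> space M. (\<xi> \<omega>, \<eta> \<omega>) \<in> C}
        = emeasure (distr M (borel \<Otimes>\<^sub>M borel) (\<lambda>\<omega>. (\<xi> \<omega>, \<eta> \<omega>))) C"
      using C by (subst emeasure_distr) (auto intro!: arg_cong[where f="emeasure M"])
    also have "\<dots> = emeasure (\<mu> \<Otimes>\<^sub>M \<nu>) C" by (simp add: joint)
    also have "\<dots> = (\<integral>\<^sup>+ y. emeasure \<nu> (Pair y -` C) \<partial>\<mu>)"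
      using C sets_prod by (intro N.emeasure_pair_measure_alt) simp
    finally show ?thesis .
  qed
  have meas_key: "(\<lambda>y. emeasure \<nu> (Pair y -` C)) \<in> borel_measurable \<mu>"
    if C: "C \<in> sets (borel \<Otimes>\<^sub>M borel)" for C
    using N.measurable_emeasure_Pair[of C \<mu>] C sets_prod by simp
  define E where "E = {\<omega> \<in> space M. \<xi> \<omega> = xl}"
  have Esets: "E \<in> sets M" unfolding E_def by measurable
  have E0: "emeasure M E = 0"
  proof (rule ccontr)
    assume ne: "emeasure M E \<noteq> 0"
    have "(\<integral>\<^sup>+ \<omega>. \<infinity> * indicator E \<omega> \<partial>M) \<le> (\<integral>\<^sup>+ \<omega>. inv_sq_dist xl (\<xi> \<omega>) \<partial>M)"
      by (intro nn_integral_mono) (auto simp: E_def inv_sq_dist_def indicator_def)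
    moreover have "(\<integral>\<^sup>+ \<omega>. \<infinity> * indicator E \<omega> \<partial>M) = \<infinity> * emeasure M E"
      using Esets by (simp add: nn_integral_cmult_indicator)
    moreover have "\<infinity> * emeasure M E = \<infinity>" using ne by (simp add: ennreal_mult_eq_top_iff)
    ultimately show False using assms(10) by (simp add: top_unique)
  qed
  have AExi: "AE \<omega> in M. \<xi> \<omega> \<noteq> xl"
  proof -
    have "{\<omega> \<in> space M. \<not> \<xi> \<omega> \<noteq> xl} = E" by (auto simp: E_def)
    from AE_iff_measurable[OF Esets this] E0 show ?thesis by simp
  qed
  have AEmu: "AE y in \<mu>. y \<noteq> xl"
    unfolding assms(8)[symmetric] using AExi by (subst AE_distr_iff) auto
  define g :: "real \<times> real \<Rightarrow> real" where "g = (\<lambda>p. xl + (fst p - xl) * exp (\<Gamma>1 + sqrt \<Lambda>1 * snd p))"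
  have gm[measurable]: "g \<in> borel_measurable (borel \<Otimes>\<^sub>M borel)" unfolding g_def by measurable
  define X where "X = (\<lambda>\<omega>. xl + (\<xi> \<omega> - xl) * exp (\<Gamma>1 + sqrt \<Lambda>1 * \<eta> \<omega>))"
  have Xg: "X \<omega> = g (\<xi> \<omega>, \<eta> \<omega>)" for \<omega> by (simp add: X_def g_def)
  have Xm[measurable]: "X \<in> borel_measurable M" unfolding X_def by measurable
  have evt: "{\<omega> \<in> space M. (\<xi> \<omega>, \<eta> \<omega>) \<in> {p \<in> space (borel \<Otimes>\<^sub>M borel). Q (g p)}} = {\<omega> \<in> space M. Q (X \<omega>)}" for Q
    by (auto simp: Xg space_pair_measure)
  have slice: "Pair y -` {p \<in> space (borel \<Otimes>\<^sub>M borel). Q (g p)} = {e. Q (xl + (y - xl) * exp (\<Gamma>1 + sqrt \<Lambda>1 * e))}" for Q y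
    by (auto simp: g_def space_pair_measure)
  have atom: "emeasure M {\<omega> \<in> space M. X \<omega> = z} = 0" for z
  proof -
    define C where "C = {p \<in> space (borel \<Otimes>\<^sub>M borel). g p = z}"
    have Cs: "C \<in> sets (borel \<Otimes>\<^sub>M borel)" unfolding C_def by measurable
    have "emeasure M {\<omega> \<in> space M. X \<omega> = z} = (\<integral>\<^sup>+ y. emeasure \<nu> (Pair y -` C) \<partial>\<mu>)"
      using key[OF Cs] evt[of "\<lambda>t. t = z"] by (simp add: C_def)
    also have "\<dots> = 0"
    proof (subst nn_integral_0_iff_AE[OF meas_key[OF Cs]])
      show "AE y in \<mu>. emeasure \<nu> (Pair y -` C) = 0"
        using AEmu
      proof (rule AE_mp, intro AE_I2 impI)
        fix y assume y: "y \<noteq> xl"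
        define e0 where "e0 = (ln ((z - xl) / (y - xl)) - \<Gamma>1) / sqrt \<Lambda>1"
        have sub: "Pair y -` C \<subseteq> {e0}"
        proof
          fix e assume "e \<in> Pair y -` C"
          then have "xl + (y - xl) * exp (\<Gamma>1 + sqrt \<Lambda>1 * e) = z" by (simp add: C_def g_def)
          then have "exp (\<Gamma>1 + sqrt \<Lambda>1 * e) = (z - xl) / (y - xl)" using y by (simp add: field_simps)
          then have "ln (exp (\<Gamma>1 + sqrt \<Lambda>1 * e)) = ln ((z - xl) / (y - xl))" by simp
          then have "\<Gamma>1 + sqrt \<Lambda>1 * e = ln ((z - xl) / (y - xl))" by simp
          then show "e \<in> {e0}" using assms(6) by (simp add: e0_def field_simps)
        qed
        have "emeasure \<nu> (Pair y -` C) \<le> emeasure \<nu> {e0}"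
          by (rule emeasure_mono[OF sub]) simp
        also have "\<dots> = 0" unfolding nu_eq by (rule snd_null) auto
        finally show "emeasure \<nu> (Pair y -` C) = 0" by simp
      qed
    qed
    finally show ?thesis .
  qed
  define D where "D = distr M borel X"
  interpret D: real_distribution D unfolding D_def by (rule P.real_distribution_distr) simp
  have cdfX: "cdf D z = measure M {\<omega> \<in> space M. X \<omega> \<le> z}" for z
    unfolding cdf_def D_def by (subst measure_distr) (auto intro!: arg_cong[where f="measure M"])
  have cont: "isCont (cdf D) z" for z
  proof -
    have "measure D {z} = measure M {\<omega> \<in> space M. X \<omega> = z}"
      unfolding D_def by (subst measure_distr) (auto intro!: arg_cong[where f="measure M"])
    also have "\<dots> = 0" using atom[of z] by (simp add: measure_def)
    finally show ?thesis by (simp add: D.isCont_cdf)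
  qed
  have ex: "\<exists>z. cdf D z = \<alpha>0"
  proof -
    have "eventually (\<lambda>x. cdf D x < \<alpha>0) at_bot"
      using D.cdf_lim_at_bot assms(3) by (rule order_tendstoD)
    then obtain a where a: "cdf D a < \<alpha>0" by (auto simp: eventually_at_bot_linorder)
    have "eventually (\<lambda>x. cdf D x > \<alpha>0) at_top"
      using D.cdf_lim_at_top_prob assms(4) by (rule order_tendstoD)
    then obtain b where b: "cdf D b > \<alpha>0" by (auto simp: eventually_at_top_linorder)
    have ab: "a \<le> b"
    proof (rule ccontr)
      assume "\<not> a \<le> b" then have "cdf D b \<le> cdf D a" by (intro D.cdf_nondecreasing) simp
      with a b show False by simp
    qed
    have "continuous_on {a..b} (cdf D)" using cont by (simp add: continuous_at_imp_continuous_on)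
    from IVT'[of "cdf D" a \<alpha>0 b, OF _ _ ab this] a b show ?thesis by auto
  qed
  have noteq: False if z12: "z1 < z2" and F1: "cdf D z1 = \<alpha>0" and F2: "cdf D z2 = \<alpha>0" for z1 z2
  proof -
    define C where "C = {p \<in> space (borel \<Otimes>\<^sub>M borel). z1 < g p \<and> g p \<le> z2}"
    have Cs: "C \<in> sets (borel \<Otimes>\<^sub>M borel)" unfolding C_def by measurable
    have "measure D {z1<..z2} = 0" using D.cdf_diff_eq[OF z12] F1 F2 by simp
    moreover have "measure D {z1<..z2} = measure M {\<omega> \<in> space M. z1 < X \<omega> \<and> X \<omega> \<le> z2}"
      unfolding D_def by (subst measure_distr) (auto intro!: arg_cong[where f="measure M"])
    ultimately have "emeasure M {\<omega> \<in> space M. z1 < X \<omega> \<and> X \<omega> \<le> z2} = 0"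
      by (simp add: P.emeasure_eq_measure)
    then have "(\<integral>\<^sup>+ y. emeasure \<nu> (Pair y -` C) \<partial>\<mu>) = 0"
      using key[OF Cs] evt[of "\<lambda>t. z1 < t \<and> t \<le> z2"] by (simp add: C_def)
    then have AE0: "AE y in \<mu>. emeasure \<nu> (Pair y -` C) = 0"
      by (subst (asm) nn_integral_0_iff_AE[OF meas_key[OF Cs]])
    have slC: "Pair y -` C = {e. z1 < xl + (y - xl) * exp (\<Gamma>1 + sqrt \<Lambda>1 * e) \<and> xl + (y - xl) * exp (\<Gamma>1 + sqrt \<Lambda>1 * e) \<le> z2}" for y
      by (auto simp: C_def g_def space_pair_measure)
    have posnu: "emeasure \<nu> (Pair y -` C) \<noteq> 0" if "{e1<..<e2} \<subseteq> Pair y -` C" "e1 < e2" for y e1 e2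
    proof
      assume "emeasure \<nu> (Pair y -` C) = 0"
      moreover have "emeasure \<nu> {e1<..<e2} \<le> emeasure \<nu> (Pair y -` C)"
        using that(1) by (rule emeasure_mono) (use Cs in simp)
      ultimately have "emeasure \<nu> {e1<..<e2} = 0" by simp
      with snd_pos[OF that(2)] show False by (simp add: nu_eq)
    qed
    have R1: "AE \<omega> in M. \<xi> \<omega> \<le> xl" if z2: "xl < z2"
    proof -
      have "AE y in \<mu>. y \<le> xl"
        using AE0
      proof (rule AE_mp, intro AE_I2 impI)
        fix y assume y0: "emeasure \<nu> (Pair y -` C) = 0"
        show "y \<le> xl"
        proof (rule ccontr)
          assume "\<not> y \<le> xl"
          then have ya: "0 < y - xl" by simp
          define u where "u = max (z1 - xl) 0"
          define d where "d = z2 - xl"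
          have ud: "0 \<le> u" "u < d" using z12 z2 by (auto simp: u_def d_def)
          obtain e1 e2 where e12: "e1 < e2" and
            he: "\<And>e. e1 < e \<Longrightarrow> e < e2 \<Longrightarrow> u + (d - u) / 3 < (y - xl) * exp (\<Gamma>1 + sqrt \<Lambda>1 * e) \<and> (y - xl) * exp (\<Gamma>1 + sqrt \<Lambda>1 * e) < u + 2 * (d - u) / 3"
            using interval_lemma[OF ya, of "u + (d - u) / 3" "u + 2 * (d - u) / 3" \<Lambda>1 \<Gamma>1] ud assms(6) by auto
          have "{e1<..<e2} \<subseteq> Pair y -` C"
          proof
            fix e assume "e \<in> {e1<..<e2}"
            with he[of e] have "u + (d - u) / 3 < (y - xl) * exp (\<Gamma>1 + sqrt \<Lambda>1 * e)"
              "(y - xl) * exp (\<Gamma>1 + sqrt \<Lambda>1 * e) < u + 2 * (d - u) / 3" by auto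
            moreover have "z1 - xl \<le> u" "d = z2 - xl" by (simp_all add: u_def d_def)
            moreover have "z1 < xl + T \<and> xl + T \<le> z2" if "u + (d - u) / 3 < T" "T < u + 2 * (d - u) / 3"
              "z1 - xl \<le> u" "d = z2 - xl" for T using that ud by (auto simp: field_simps)
            ultimately show "e \<in> Pair y -` C" unfolding slC by simp
          qed
          from posnu[OF this e12] y0 show False by simp
        qed
      qed
      then show ?thesis unfolding assms(8)[symmetric] by (subst (asm) AE_distr_iff) auto
    qed
    have R2: "AE \<omega> in M. \<xi> \<omega> \<ge> xl" if z1: "z1 < xl"
    proof -
      have "AE y in \<mu>. y \<ge> xl"
        using AE0
      proof (rule AE_mp, intro AE_I2 impI)
        fix y assume y0: "emeasure \<nu> (Pair y -` C) = 0"
        show "y \<ge> xl"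
        proof (rule ccontr)
          assume "\<not> y \<ge> xl"
          then have ya: "0 < xl - y" by simp
          define u where "u = max (xl - z2) 0"
          define d where "d = xl - z1"
          have ud: "0 \<le> u" "u < d" using z12 z1 by (auto simp: u_def d_def)
          obtain e1 e2 where e12: "e1 < e2" and
            he: "\<And>e. e1 < e \<Longrightarrow> e < e2 \<Longrightarrow> u + (d - u) / 3 < (xl - y) * exp (\<Gamma>1 + sqrt \<Lambda>1 * e) \<and> (xl - y) * exp (\<Gamma>1 + sqrt \<Lambda>1 * e) < u + 2 * (d - u) / 3"
            using interval_lemma[OF ya, of "u + (d - u) / 3" "u + 2 * (d - u) / 3" \<Lambda>1 \<Gamma>1] ud assms(6) by auto
          have "{e1<..<e2} \<subseteq> Pair y -` C"
          proof
            fix e assume "e \<in> {e1<..<e2}"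
            with he[of e] have "u + (d - u) / 3 < (xl - y) * exp (\<Gamma>1 + sqrt \<Lambda>1 * e)"
              "(xl - y) * exp (\<Gamma>1 + sqrt \<Lambda>1 * e) < u + 2 * (d - u) / 3" by auto
            moreover have "(y - xl) * exp (\<Gamma>1 + sqrt \<Lambda>1 * e) = - ((xl - y) * exp (\<Gamma>1 + sqrt \<Lambda>1 * e))"
              by (simp add: algebra_simps)
            moreover have "xl - z2 \<le> u" "d = xl - z1" by (simp_all add: u_def d_def)
            moreover have "z1 < xl + (- T) \<and> xl + (- T) \<le> z2" if "u + (d - u) / 3 < T" "T < u + 2 * (d - u) / 3"
              "xl - z2 \<le> u" "d = xl - z1" for T using that ud by (auto simp: field_simps)
            ultimately show "e \<in> Pair y -` C" unfolding slC by simp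
          qed
          from posnu[OF this e12] y0 show False by simp
        qed
      qed
      then show ?thesis unfolding assms(8)[symmetric] by (subst (asm) AE_distr_iff) auto
    qed
    show False
    proof (cases "z1 < xl")
      case True
      note r2 = R2[OF True]
      show False
      proof (cases "xl < z2")
        case True
        have "AE \<omega> in M. False" using r2 R1[OF True] AExi by eventually_elim auto
        then show False by simp
      next
        case False
        have "AE \<omega> in M. \<not> X \<omega> \<le> z2"
          using r2 AExi
        proof eventually_elim
          case (elim \<omega>)
          then have "0 < (\<xi> \<omega> - xl) * exp (\<Gamma>1 + sqrt \<Lambda>1 * \<eta> \<omega>)" by simp
          then show ?case using False by (simp add: X_def)
        qed
        then have "measure M {\<omega> \<in> space M. X \<omega> \<le> z2} = 0"
          by (subst P.prob_Collect_eq_0) auto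
        then show False using F2 cdfX assms(3) by simp
      qed
    next
      case False
      then have z2: "xl < z2" using z12 by simp
      have "AE \<omega> in M. X \<omega> \<le> z1"
        using R1[OF z2] AExi
      proof eventually_elim
        case (elim \<omega>)
        then have "(\<xi> \<omega> - xl) * exp (\<Gamma>1 + sqrt \<Lambda>1 * \<eta> \<omega>) < 0" by (simp add: mult_neg_pos)
        then show ?case using False by (simp add: X_def)
      qed
      then have "measure M {\<omega> \<in> space M. X \<omega> \<le> z1} = 1"
        by (subst P.prob_Collect_eq_1) auto
      then show False using F1 cdfX assms(4) by simp
    qed
  qed
  have "\<exists>!z. cdf D z = \<alpha>0"
  proof (rule ex_ex1I[OF ex])
    fix z1 z2 assume "cdf D z1 = \<alpha>0" "cdf D z2 = \<alpha>0"
    then show "z1 = z2" using noteq by (metis linorder_neqE_linordered_idom)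
  qed
  then show ?thesis by (simp add: cdfX X_def)
qed

end
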